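(* Let $H$ be a connected $3$-uniform hypergraph on $n$ vertices. Then $|E(H)|\geq \left\lfloor \frac{1}{2}\binom{n}{2}\right\rfloor$. Moreover, this bound is attained: for every $n$ there exists a connected $3$-uniform hypergraph on $n$ vertices with exactly $\left\lfloor \frac{1}{2}\binom{n}{2}\right\rfloor$ edges.
   Context: A strong path in a $3$-uniform hypergraph $H$ is a sequence of edges $E_1,\dots,E_m$ of $H$ with $|E_t\cap E_{t+1}|=2$ for all $t$. $H$ is connected if for any two distinct $2$-subsets $\{u,v\},\{u',v'\}$ of $V(H)$ there is a strong path $E_1,\dots,E_m$ in $H$ with $\{u,v\}\subseteq E_1$ and $\{u',v'\}\subseteq E_m$ (for $n\le 2$ the condition is vacuous). *)

theory Defs
  imports Main
begin

definition uniform3 :: "'a set \<Rightarrow> 'a set set \<Rightarrow> bool" where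
  "uniform3 V E \<longleftrightarrow> finite V \<and> (\<forall>e\<in>E. e \<subseteq> V \<and> card e = 3)"

definition strong_path :: "'a set set \<Rightarrow> 'a set list \<Rightarrow> bool" where
  "strong_path E ps \<longleftrightarrow> ps \<noteq> [] \<and> set ps \<subseteq> E \<and>
     (\<forall>t. Suc t < length ps \<longrightarrow> card (ps ! t \<inter> ps ! Suc t) = 2)"

definition hg_connected :: "'a set \<Rightarrow> 'a set set \<Rightarrow> bool" where
  "hg_connected V E \<longleftrightarrow>
     (\<forall>P Q. P \<subseteq> V \<longrightarrow> card P = 2 \<longrightarrow> Q \<subseteq> V \<longrightarrow> card Q = 2 \<longrightarrow> P \<noteq> Q \<longrightarrow>
        (\<exists>ps. strong_path E ps \<and> P \<subseteq> hd ps \<and> Q \<subseteq> last ps))"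

end

theory Submission
  imports Defs
begin

section \<open>Chains and connectivity of edges\<close>

fun chain :: "'a set list \<Rightarrow> bool" where
  "chain [] = True"
| "chain [x] = True"
| "chain (x # y # zs) = (card (x \<inter> y) = 2 \<and> chain (y # zs))"

lemma chain_iff: "chain ps \<longleftrightarrow> (\<forall>t. Suc t < length ps \<longrightarrow> card (ps ! t \<inter> ps ! Suc t) = 2)"
proof (induction ps rule: chain.induct)
  case (3 x y zs)
  show ?case
  proof
    assume "chain (x # y # zs)"
    then have a: "card (x \<inter> y) = 2" and b: "chain (y # zs)" by auto
    show "\<forall>t. Suc t < length (x # y # zs) \<longrightarrow> card ((x # y # zs) ! t \<inter> (x # y # zs) ! Suc t) = 2"
    proof (intro allI impI)
      fix t assume "Suc t < length (x # y # zs)"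
      then show "card ((x # y # zs) ! t \<inter> (x # y # zs) ! Suc t) = 2"
        using a b 3 by (cases t) auto
    qed
  next
    assume H: "\<forall>t. Suc t < length (x # y # zs) \<longrightarrow> card ((x # y # zs) ! t \<inter> (x # y # zs) ! Suc t) = 2"
    have "card (x \<inter> y) = 2" using H[rule_format, of 0] by simp
    moreover have "chain (y # zs)" unfolding 3
    proof (intro allI impI)
      fix t assume "Suc t < length (y # zs)"
      then show "card ((y # zs) ! t \<inter> (y # zs) ! Suc t) = 2" using H[rule_format, of "Suc t"] by simp
    qed
    ultimately show "chain (x # y # zs)" by simp
  qed
qed auto

lemma chain_append: "chain (xs @ y # ys) \<longleftrightarrow> chain (xs @ [y]) \<and> chain (y # ys)"
  by (induction xs rule: chain.induct) auto

lemma strong_path_chain: "strong_path E ps \<longleftrightarrow> ps \<noteq> [] \<and> set ps \<subseteq> E \<and> chain ps"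
  unfolding strong_path_def chain_iff by auto

definition conn :: "'a set set \<Rightarrow> 'a set \<Rightarrow> 'a set \<Rightarrow> bool" where
  "conn E e f \<longleftrightarrow> (\<exists>ps. strong_path E ps \<and> hd ps = e \<and> last ps = f)"

lemma conn_refl: "e \<in> E \<Longrightarrow> conn E e e"
  unfolding conn_def by (rule exI[of _ "[e]"]) (simp add: strong_path_chain)

lemma conn_edge: "e \<in> E \<Longrightarrow> f \<in> E \<Longrightarrow> card (e \<inter> f) = 2 \<Longrightarrow> conn E e f"
  unfolding conn_def by (rule exI[of _ "[e,f]"]) (simp add: strong_path_chain)

lemma conn_mono: "conn E e f \<Longrightarrow> E \<subseteq> E' \<Longrightarrow> conn E' e f"
  unfolding conn_def strong_path_chain by blast

lemma conn_trans:
  assumes "conn E e f" "conn E f g" shows "conn E e g"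
proof -
  obtain ps1 where p1: "strong_path E ps1" "hd ps1 = e" "last ps1 = f"
    using assms(1) unfolding conn_def by blast
  obtain ps2 where p2: "strong_path E ps2" "hd ps2 = f" "last ps2 = g"
    using assms(2) unfolding conn_def by blast
  have c1: "chain ps1" and c2: "chain ps2" and s1: "set ps1 \<subseteq> E" and s2: "set ps2 \<subseteq> E"
    and ne1: "ps1 \<noteq> []" and ne2: "ps2 \<noteq> []"
    using p1(1) p2(1) unfolding strong_path_chain by auto
  obtain zs where zs: "ps2 = f # zs" using ne2 p2(2) by (cases ps2) auto
  have e1: "ps1 = butlast ps1 @ [f]" using ne1 p1(3) append_butlast_last_id by metis
  define qs where "qs = butlast ps1 @ f # zs"
  have q1: "qs = ps1 @ zs" unfolding qs_def by (subst e1) simp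
  have q2: "qs = butlast ps1 @ ps2" unfolding qs_def zs by simp
  have "chain (butlast ps1 @ [f])" using c1 e1 by metis
  moreover have "chain (f # zs)" using c2 zs by simp
  ultimately have "chain qs" unfolding qs_def using chain_append by blast
  moreover have "set qs \<subseteq> E" unfolding q2 using s1 s2 in_set_butlastD by fastforce
  moreover have "qs \<noteq> []" using q2 ne2 by simp
  moreover have "hd qs = e" using q1 ne1 p1 by simp
  moreover have "last qs = g" using q2 ne2 p2 by simp
  ultimately show ?thesis unfolding conn_def strong_path_chain by blast
qed

definition allconn :: "'a set set \<Rightarrow> bool" where
  "allconn E \<longleftrightarrow> (\<forall>e\<in>E. \<forall>f\<in>E. conn E e f)"

lemma allconn_add:
  assumes A: "allconn E" and W: "\<forall>x\<in>X. \<exists>f\<in>E. x = f \<or> card (x \<inter> f) = 2"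
  shows "allconn (E \<union> X)"
proof -
  let ?E = "E \<union> X"
  have key: "\<exists>f\<in>E. conn ?E a f \<and> conn ?E f a" if "a \<in> ?E" for a
  proof (cases "a \<in> E")
    case True then show ?thesis using conn_refl[of a ?E] by blast
  next
    case False
    then have "a \<in> X" using that by blast
    then obtain f where f: "f \<in> E" "a = f \<or> card (a \<inter> f) = 2" using W by blast
    show ?thesis
    proof (rule bexI[OF _ f(1)])
      show "conn ?E a f \<and> conn ?E f a"
        using f that conn_refl[of a ?E] conn_edge[of a ?E f] conn_edge[of f ?E a]
        by (auto simp: Int_commute)
    qed
  qed
  show ?thesis unfolding allconn_def
  proof (intro ballI)
    fix a b assume ab: "a \<in> ?E" "b \<in> ?E"
    obtain fa where fa: "fa \<in> E" "conn ?E a fa" using key[OF ab(1)] by blast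
    obtain fb where fb: "fb \<in> E" "conn ?E fb b" using key[OF ab(2)] by blast
    have "conn ?E fa fb" using A fa fb unfolding allconn_def by (meson conn_mono Un_upper1)
    then show "conn ?E a b" using fa fb conn_trans by metis
  qed
qed

lemma allconn_insert:
  "allconn E \<Longrightarrow> f \<in> E \<Longrightarrow> card (x \<inter> f) = 2 \<Longrightarrow> allconn (insert x E)"
proof -
  assume a: "allconn E" "f \<in> E" "card (x \<inter> f) = 2"
  have "allconn (E \<union> {x})" by (rule allconn_add[OF a(1)]) (use a(2,3) in blast)
  then show ?thesis by simp
qed

lemma allconn_single: "allconn {e}"
  unfolding allconn_def by (simp add: conn_refl)

lemma hg_conn_of:
  assumes "allconn E" "\<forall>P. P \<subseteq> V \<longrightarrow> card P = 2 \<longrightarrow> (\<exists>e\<in>E. P \<subseteq> e)"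
  shows "hg_connected V E"
  unfolding hg_connected_def
proof (intro allI impI)
  fix P Q assume H: "P \<subseteq> V" "card P = 2" "Q \<subseteq> V" "card Q = 2" "P \<noteq> Q"
  obtain e where e: "e \<in> E" "P \<subseteq> e" using assms(2) H(1,2) by meson
  obtain f where f: "f \<in> E" "Q \<subseteq> f" using assms(2) H(3,4) by meson
  have "conn E e f" using assms(1) e(1) f(1) unfolding allconn_def by simp
  then show "\<exists>ps. strong_path E ps \<and> P \<subseteq> hd ps \<and> Q \<subseteq> last ps"
  proof -
    obtain ps where "strong_path E ps" "hd ps = e" "last ps = f" using \<open>conn E e f\<close> unfolding conn_def by blast
    then show ?thesis using e(2) f(2) by blast
  qed
qed


section \<open>Lower bound\<close>

definition pairs :: "'a set \<Rightarrow> 'a set set" where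
  "pairs X = {p. p \<subseteq> X \<and> card p = 2}"

lemma finite_pairs: "finite X \<Longrightarrow> finite (pairs X)"
  unfolding pairs_def by (rule rev_finite_subset[of "Pow X"]) auto

lemma card_pairs: "finite X \<Longrightarrow> card (pairs X) = card X choose 2"
  unfolding pairs_def by (rule n_subsets)

inductive bld :: "'a set set \<Rightarrow> 'a set list \<Rightarrow> bool" for E where
  b1: "e \<in> E \<Longrightarrow> bld E [e]"
| b2: "bld E L \<Longrightarrow> y \<in> E \<Longrightarrow> y \<notin> set L \<Longrightarrow> x \<in> set L \<Longrightarrow> 2 \<le> card (x \<inter> y) \<Longrightarrow> bld E (L @ [y])"

lemma bld_basic: "bld E L \<Longrightarrow> L \<noteq> [] \<and> set L \<subseteq> E"
  by (induction rule: bld.induct) auto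

lemma bld_count:
  assumes F: "\<forall>e\<in>E. finite e \<and> card e = 3" and B: "bld E L"
  shows "card (\<Union>e\<in>set L. pairs e) \<le> 2 * card (set L) + 1"
  using B
proof (induction rule: bld.induct)
  case (b1 e)
  then have "finite e" "card e = 3" using F by auto
  then show ?case by (simp add: card_pairs choose_two)
next
  case (b2 L y x)
  let ?U = "\<Union>e\<in>set L. pairs e"
  have fy: "finite y" "card y = 3" using F b2.hyps(2) by auto
  have sL: "set L \<subseteq> E" using bld_basic[OF b2.hyps(1)] by simp
  have fU: "finite ?U" using F sL finite_pairs by blast
  have fx: "finite x" using F sL b2.hyps(4) by blast
  obtain p where p: "p \<subseteq> x \<inter> y" "card p = 2"
    using obtain_subset_with_card_n[OF b2.hyps(5)] by blast
  have pU: "p \<in> ?U" using p b2.hyps(4) unfolding pairs_def by blast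
  have py: "p \<in> pairs y" using p unfolding pairs_def by blast
  have eq: "(\<Union>e\<in>set (L @ [y]). pairs e) = ?U \<union> (pairs y - {p})" using pU by auto
  have "card (pairs y - {p}) = 2" using py fy card_pairs[OF fy(1)] finite_pairs[OF fy(1)]
    by (simp add: choose_two)
  then have "card (\<Union>e\<in>set (L @ [y]). pairs e) \<le> card ?U + 2"
    unfolding eq using card_Un_le[of ?U "pairs y - {p}"] by simp
  moreover have "card (set (L @ [y])) = Suc (card (set L))" using b2.hyps(3) by simp
  ultimately show ?case using b2.IH by simp
qed

lemma exit_idx: "xs \<noteq> [] \<Longrightarrow> hd xs \<in> S \<Longrightarrow> last xs \<notin> S \<Longrightarrow> \<exists>t. Suc t < length xs \<and> xs ! t \<in> S \<and> xs ! Suc t \<notin> S"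
proof (induction xs)
  case Nil then show ?case by simp
next
  case (Cons a xs)
  show ?case
  proof (cases "xs = []")
    case True then show ?thesis using Cons.prems by simp
  next
    case False
    show ?thesis
    proof (cases "hd xs \<in> S")
      case True
      have "last xs \<notin> S" using Cons.prems False by simp
      then obtain t where "Suc t < length xs" "xs ! t \<in> S" "xs ! Suc t \<notin> S" using Cons.IH True False by blast
      then show ?thesis by (intro exI[of _ "Suc t"]) simp
    next
      case c: False
      have "xs ! 0 \<notin> S" using c False by (simp add: hd_conv_nth)
      then show ?thesis using Cons.prems False by (intro exI[of _ 0]) auto
    qed
  qed
qed

lemma part1:
  assumes U: "uniform3 V E" and C: "hg_connected V E"
  shows "(card V choose 2) div 2 \<le> card E"
proof (cases "card V < 3")
  case True
  have "card V choose 2 \<le> 1"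
  proof (cases "card V < 2")
    case True then show ?thesis by (simp add: binomial_eq_0)
  next
    case c: False
    then have "card V = 2" using True by arith
    then show ?thesis by simp
  qed
  then show ?thesis by linarith
next
  case False
  have finV: "finite V" using U unfolding uniform3_def by simp
  have Ee: "\<And>e. e \<in> E \<Longrightarrow> e \<subseteq> V \<and> card e = 3" using U unfolding uniform3_def by simp
  have Ef: "\<forall>e\<in>E. finite e \<and> card e = 3" using Ee card.infinite by fastforce
  have finE: "finite E" by (rule rev_finite_subset[of "Pow V"]) (use finV Ee in auto)
  have cover: "\<exists>e\<in>E. P \<subseteq> e" if P: "P \<subseteq> V" "card P = 2" for P
  proof -
    have "\<not> V \<subseteq> P"
    proof
      assume "V \<subseteq> P"
      then have "card V \<le> card P" using P card_mono card.infinite by (metis zero_neq_numeral)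
      then show False using False P by simp
    qed
    then obtain x where x: "x \<in> V" "x \<notin> P" by blast
    obtain y where y: "y \<in> P" using P by fastforce
    have xy: "x \<noteq> y" using x y by blast
    have Q: "{x,y} \<subseteq> V" "card {x,y} = 2" "P \<noteq> {x,y}" using x y P xy by auto
    obtain ps where ps: "strong_path E ps" "P \<subseteq> hd ps"
      using C[unfolded hg_connected_def, rule_format, OF P(1) P(2) Q(1) Q(2) Q(3)] by blast
    have "hd ps \<in> E" using ps(1) unfolding strong_path_def by auto
    then show ?thesis using ps(2) by blast
  qed
  have ext: "\<exists>y. bld E (L @ [y])"
    if L: "bld E L" and Q: "Q \<subseteq> V" "card Q = 2" "\<not> (\<exists>e\<in>set L. Q \<subseteq> e)" for L Q
  proof -
    have Lb: "L \<noteq> []" "set L \<subseteq> E" using bld_basic[OF L] by simp_all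
    define e1 where "e1 = hd L"
    have e11: "e1 \<in> set L" unfolding e1_def using Lb(1) by (rule hd_in_set)
    have e1: "e1 \<in> set L" "e1 \<in> E" using e11 subsetD[OF Lb(2) e11] by simp_all
    have e1V1: "e1 \<subseteq> V" "card e1 = 3" using Ee[OF e1(2)] by simp_all
    have "finite e1" by (rule card_ge_0_finite) (simp add: e1V1(2))
    then have e1V: "e1 \<subseteq> V" "card e1 = 3" "finite e1" using e1V1 by simp_all
    have "2 \<le> card e1" using e1V by simp
    then obtain P where P: "P \<subseteq> e1" "card P = 2"
      by (rule obtain_subset_with_card_n)
    have PQ: "P \<noteq> Q" using P(1) e1(1) Q(3) by auto
    obtain ps where ps: "strong_path E ps" "P \<subseteq> hd ps" "Q \<subseteq> last ps"
      using C[unfolded hg_connected_def, rule_format, OF subset_trans[OF P(1) e1V(1)] P(2) Q(1) Q(2) PQ] by blast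
    have psb: "ps \<noteq> []" "set ps \<subseteq> E" using ps(1) unfolding strong_path_def by auto
    have lastL: "last ps \<notin> set L" using ps(3) Q(3) by auto
    show ?thesis
    proof (cases "hd ps \<in> set L")
      case False
      have h1: "hd ps \<in> E" using psb(2) hd_in_set[OF psb(1)] by (rule subsetD)
      have "P \<subseteq> e1 \<inter> hd ps" using P(1) ps(2) by (rule Int_greatest)
      moreover have "finite (e1 \<inter> hd ps)" using e1V(3) by simp
      ultimately have "card P \<le> card (e1 \<inter> hd ps)" by (rule card_mono[rotated])
      then have h2: "2 \<le> card (e1 \<inter> hd ps)" using P(2) by simp
      have "bld E (L @ [hd ps])" by (rule b2[OF L h1 False e1(1) h2])
      then show ?thesis by blast
    next
      case True
      obtain t where t: "Suc t < length ps" "ps ! t \<in> set L" "ps ! Suc t \<notin> set L"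
        using exit_idx[OF psb(1) True lastL] by blast
      have h1: "ps ! Suc t \<in> E" using psb(2) nth_mem[OF t(1)] by blast
      have "\<forall>t. Suc t < length ps \<longrightarrow> card (ps ! t \<inter> ps ! Suc t) = 2"
        using ps(1) unfolding strong_path_def by simp
      then have "card (ps ! t \<inter> ps ! Suc t) = 2" using t(1) by blast
      then have h2: "2 \<le> card (ps ! t \<inter> ps ! Suc t)" by simp
      have "bld E (L @ [ps ! Suc t])" by (rule b2[OF L h1 t(3) t(2) h2])
      then show ?thesis by blast
    qed
  qed
  let ?cov = "\<lambda>L. \<forall>Q. Q \<subseteq> V \<longrightarrow> card Q = 2 \<longrightarrow> (\<exists>e\<in>set L. Q \<subseteq> e)"
  have grow: "\<exists>y. bld E (L @ [y]) \<and> card (set (L @ [y])) = Suc (card (set L))"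
    if L: "bld E L" and nc: "\<not> ?cov L" for L
  proof -
    from nc obtain Q where Q: "Q \<subseteq> V" "card Q = 2" "\<not> (\<exists>e\<in>set L. Q \<subseteq> e)" by auto
    obtain y where y: "bld E (L @ [y])" using ext[OF L Q] by auto
    from y have "y \<notin> set L" by (cases rule: bld.cases) auto
    then have "card (set (L @ [y])) = Suc (card (set L))" by simp
    then show ?thesis using y by auto
  qed
  have cardle: "card (set L) \<le> card E" if "bld E L" for L
    using bld_basic[OF that] finE card_mono by auto
  have iter: "\<forall>L. bld E L \<longrightarrow> card E - card (set L) \<le> k \<longrightarrow> (\<exists>L'. bld E L' \<and> ?cov L')" for k
  proof (induction k)
    case 0
    show ?case
    proof (intro allI impI)
      fix L assume L: "bld E L" "card E - card (set L) \<le> 0"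
      have "?cov L"
      proof (rule ccontr)
        assume nc: "\<not> ?cov L"
        obtain y where y: "bld E (L @ [y])" "card (set (L @ [y])) = Suc (card (set L))"
          using grow[OF L(1) nc] by auto
        have "card (set (L @ [y])) \<le> card E" using cardle[OF y(1)] .
        then show False using L(2) y(2) by linarith
      qed
      then show "\<exists>L'. bld E L' \<and> ?cov L'" using L(1) by auto
    qed
  next
    case (Suc k)
    show ?case
    proof (intro allI impI)
      fix L assume L: "bld E L" "card E - card (set L) \<le> Suc k"
      show "\<exists>L'. bld E L' \<and> ?cov L'"
      proof (cases "?cov L")
        case True then show ?thesis using L(1) by auto
      next
        case False
        obtain y where y: "bld E (L @ [y])" "card (set (L @ [y])) = Suc (card (set L))"
          using grow[OF L(1) False] by auto
        have "card E - card (set (L @ [y])) \<le> k" using L(2) y(2) by linarith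
        then show ?thesis using Suc.IH y(1) by auto
      qed
    qed
  qed
  have "2 \<le> card V" using False by simp
  then obtain P0 where P0: "P0 \<subseteq> V" "card P0 = 2"
    by (rule obtain_subset_with_card_n)
  obtain e0 where e0: "e0 \<in> E" using cover[OF P0] by auto
  have "\<exists>L'. bld E L' \<and> ?cov L'" by (rule iter[of "card E", rule_format, OF b1[OF e0]]) simp
  then obtain L' where L': "bld E L'" "\<forall>Q. Q \<subseteq> V \<longrightarrow> card Q = 2 \<longrightarrow> (\<exists>e\<in>set L'. Q \<subseteq> e)"
    by auto
  have sL': "set L' \<subseteq> E" using bld_basic[OF L'(1)] by simp
  have "pairs V \<subseteq> (\<Union>e\<in>set L'. pairs e)" using L'(2) unfolding pairs_def by blast
  moreover have "finite (\<Union>e\<in>set L'. pairs e)" using sL' Ef finite_pairs by blast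
  ultimately have "card (pairs V) \<le> card (\<Union>e\<in>set L'. pairs e)" by (rule card_mono[rotated])
  also have "\<dots> \<le> 2 * card (set L') + 1" by (rule bld_count[OF Ef L'(1)])
  also have "\<dots> \<le> 2 * card E + 1" using card_mono[OF finE sL'] by simp
  finally have "card V choose 2 \<le> 2 * card E + 1" using card_pairs[OF finV] by simp
  then show ?thesis by linarith
qed


section \<open>Construction\<close>

lemma ch: "Suc n choose 2 = (n choose 2) + n"
  using binomial_Suc_Suc[of n 1] by (simp add: numeral_2_eq_2)

lemma ch4: "(n + 4) choose 2 = (n choose 2) + 4 * n + 6"
  by (simp add: ch numeral_eq_Suc)

fun ok :: "'a set list \<Rightarrow> 'a set list \<Rightarrow> bool" where
  "ok prev [] = True"
| "ok prev (x # xs) = ((\<exists>f\<in>set prev. card (x \<inter> f) = 2) \<and> ok (prev @ [x]) xs)"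

lemma ok_allconn: "allconn (set prev) \<Longrightarrow> ok prev xs \<Longrightarrow> allconn (set (prev @ xs))"
proof (induction xs arbitrary: prev)
  case Nil then show ?case by simp
next
  case (Cons x xs)
  from Cons.prems(2) obtain f where f: "f \<in> set prev" "card (x \<inter> f) = 2" and r: "ok (prev @ [x]) xs" by auto
  have "allconn (insert x (set prev))" by (rule allconn_insert[OF Cons.prems(1) f])
  then have "allconn (set (prev @ [x]))" by simp
  from Cons.IH[OF this r] show ?case by simp
qed

definition step :: "nat \<Rightarrow> nat set list" where
  "step n = [{0,1,n}] @ map (\<lambda>i. {i,n,n+1}) [1..<n] @ [{0,n,n+2},{0,n+2,n+3}]
     @ map (\<lambda>i. {i,n+2,n+3}) [1..<n] @ [{n,n+1,n+3},{0,n+1,n+2}]"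

lemma set_step: "set (step n) = {{0,1,n}} \<union> (\<lambda>i. {i,n,n+1}) ` {1..<n} \<union> {{0,n,n+2},{0,n+2,n+3}}
     \<union> (\<lambda>i. {i,n+2,n+3}) ` {1..<n} \<union> {{n,n+1,n+3},{0,n+1,n+2}}"
  unfolding step_def
  by (simp only: set_append set_map set_upt list.set Un_assoc insert_is_Un[symmetric] Un_empty_right Un_insert_left)

lemma step_len: "n \<ge> 1 \<Longrightarrow> length (step n) = 2 * n + 3"
  unfolding step_def by simp

lemma step_U: "n \<ge> 3 \<Longrightarrow> \<forall>e\<in>set (step n). e \<subseteq> {..<n+4} \<and> card e = 3"
  unfolding set_step by auto

lemma mem_step:
  "{0,1,n} \<in> set (step n)"
  "i \<in> {1..<n} \<Longrightarrow> {i,n,n+1} \<in> set (step n)"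
  "{0,n,n+2} \<in> set (step n)"
  "{0,n+2,n+3} \<in> set (step n)"
  "i \<in> {1..<n} \<Longrightarrow> {i,n+2,n+3} \<in> set (step n)"
  "{n,n+1,n+3} \<in> set (step n)"
  "{0,n+1,n+2} \<in> set (step n)"
  unfolding set_step
        apply (rule UnI1, rule UnI1, rule UnI1, rule UnI1, rule singletonI)
       apply (rule UnI1, rule UnI1, rule UnI1, rule UnI2, erule imageI)
      apply (rule UnI1, rule UnI1, rule UnI2, rule insertI1)
     apply (rule UnI1, rule UnI1, rule UnI2, rule insertI2, rule singletonI)
    apply (rule UnI1, rule UnI2, erule imageI)
   apply (rule UnI2, rule insertI1)
  apply (rule UnI2, rule insertI2, rule singletonI)
  done

lemma wit: "e \<in> S \<Longrightarrow> u \<in> e \<Longrightarrow> v \<in> e \<Longrightarrow> \<exists>e\<in>S. u \<in> e \<and> v \<in> e"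
  by (rule bexI[of _ e]) simp_all

lemma step_C:
  assumes n: "n \<ge> 3" and uv: "u < v" "n \<le> v" "v < n + 4"
  shows "\<exists>e\<in>set (step n). u \<in> e \<and> v \<in> e"
proof -
  have v: "v = n \<or> v = n+1 \<or> v = n+2 \<or> v = n+3" using uv by arith
  have u: "u = 0 \<or> (1 \<le> u \<and> u < n) \<or> u = n \<or> u = n+1 \<or> u = n+2" using uv by arith
  have ui: "u \<in> {1..<n}" if "1 \<le> u" "u < n" using that by simp
  show ?thesis
  proof (cases "u = 0")
    case u0: True
    show ?thesis
    proof (cases "v = n")
      case True then show ?thesis using u0 by (intro wit[OF mem_step(1)]) simp_all
    next
      case f1: False
      show ?thesis
      proof (cases "v = n+1")
        case True then show ?thesis using u0 by (intro wit[OF mem_step(7)]) simp_all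
      next
        case f2: False
        show ?thesis
        proof (cases "v = n+2")
          case True then show ?thesis using u0 by (intro wit[OF mem_step(3)]) simp_all
        next
          case False then have "v = n+3" using v f1 f2 by simp
          then show ?thesis using u0 by (intro wit[OF mem_step(4)]) simp_all
        qed
      qed
    qed
  next
    case un0: False
    show ?thesis
    proof (cases "u < n")
      case ul: True
      have uI: "u \<in> {1..<n}" using un0 ul by simp
      show ?thesis
      proof (cases "v = n \<or> v = n+1")
        case True then show ?thesis by (intro wit[OF mem_step(2)[OF uI]]) auto
      next
        case False then have "v = n+2 \<or> v = n+3" using v by simp
        then show ?thesis by (intro wit[OF mem_step(5)[OF uI]]) auto
      qed
    next
      case False
      then have u2: "u = n \<or> u = n+1 \<or> u = n+2" using u un0 by simp
      show ?thesis
      proof (cases "u = n")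
        case un: True
        show ?thesis
        proof (cases "v = n+1 \<or> v = n+3")
          case True then show ?thesis using un by (intro wit[OF mem_step(6)]) auto
        next
          case False then have "v = n+2" using v uv un by auto
          then show ?thesis using un by (intro wit[OF mem_step(3)]) simp_all
        qed
      next
        case un: False
        show ?thesis
        proof (cases "u = n+1")
          case u1: True
          show ?thesis
          proof (cases "v = n+2")
            case True then show ?thesis using u1 by (intro wit[OF mem_step(7)]) simp_all
          next
            case False then have "v = n+3" using v uv u1 by auto
            then show ?thesis using u1 by (intro wit[OF mem_step(6)]) simp_all
          qed
        next
          case False then have "u = n+2" using u2 un by simp
          moreover then have "v = n+3" using v uv by auto
          ultimately show ?thesis by (intro wit[OF mem_step(4)]) simp_all
        qed
      qed
    qed
  qed
qed

lemma allconn_addX: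
  assumes "allconn B" "f \<in> B" "\<forall>x\<in>X. x = f \<or> card (x \<inter> f) = 2"
  shows "allconn (B \<union> X)"
proof (rule allconn_add[OF assms(1)])
  show "\<forall>x\<in>X. \<exists>f\<in>B. x = f \<or> card (x \<inter> f) = 2"
  proof
    fix x assume "x \<in> X"
    then have "x = f \<or> card (x \<inter> f) = 2" using assms(3) by simp
    then show "\<exists>f\<in>B. x = f \<or> card (x \<inter> f) = 2" using assms(2) by (rule bexI)
  qed
qed

lemma allconn_add1:
  assumes "allconn B" "f \<in> B" "card (x \<inter> f) = 2"
  shows "allconn (B \<union> {x})"
  by (rule allconn_addX[OF assms(1,2)]) (use assms(3) in simp)

lemma un_shape:
  "b \<in> X3 \<Longrightarrow> E \<union> {a} \<union> {b} \<union> X3 \<union> {c} \<union> {d} \<union> X6 \<union> {e} \<union> {g}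
     = E \<union> ({a} \<union> X3 \<union> {c, d} \<union> X6 \<union> {e, g})"
  by auto

lemma step_A:
  assumes n: "n \<ge> 3" and A: "allconn E" and f: "f \<in> E" "0 \<in> f" "1 \<in> f" "f \<subseteq> {..<n}"
  shows "allconn (E \<union> set (step n))"
proof -
  define a where "a = {0,1,n}"
  define b where "b = {1,n,n+1}"
  define c where "c = {0,n,n+2}"
  define d where "d = {0,n+2,n+3}"
  define e where "e = {n,n+1,n+3}"
  define g where "g = {0,n+1,n+2}"
  define X3 where "X3 = (\<lambda>i. {i,n,n+1}) ` {1..<n}"
  define X6 where "X6 = (\<lambda>i. {i,n+2,n+3}) ` {1..<n}"
  define B1 where "B1 = E \<union> {a}"
  define B2 where "B2 = B1 \<union> {b}"
  define B3 where "B3 = B2 \<union> X3"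
  define B4 where "B4 = B3 \<union> {c}"
  define B5 where "B5 = B4 \<union> {d}"
  define B6 where "B6 = B5 \<union> X6"
  define B7 where "B7 = B6 \<union> {e}"
  define B8 where "B8 = B7 \<union> {g}"
  have aB1: "a \<in> B1" unfolding B1_def by simp
  have bB2: "b \<in> B2" unfolding B2_def by simp
  have B12: "B1 \<subseteq> B2" "B2 \<subseteq> B3" "B3 \<subseteq> B4" "B4 \<subseteq> B5" "B5 \<subseteq> B6" "B6 \<subseteq> B7"
    unfolding B2_def B3_def B4_def B5_def B6_def B7_def by auto
  have cB4: "c \<in> B4" unfolding B4_def by simp
  have dB5: "d \<in> B5" unfolding B5_def by simp
  have nf: "n \<notin> f" using f(4) by auto
  have "a \<inter> f = {0,1}" unfolding a_def using f(2,3) nf by auto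
  then have "card (a \<inter> f) = 2" by simp
  then have A1: "allconn B1" unfolding B1_def by (rule allconn_add1[OF A f(1)])
  have "card (b \<inter> a) = 2" unfolding a_def b_def using n by simp
  then have A2: "allconn B2" unfolding B2_def by (rule allconn_add1[OF A1 aB1])
  have "\<forall>x\<in>X3. x = b \<or> card (x \<inter> b) = 2"
  proof
    fix x assume "x \<in> X3"
    then obtain i where i: "i \<in> {1..<n}" "x = {i,n,n+1}" unfolding X3_def by auto
    show "x = b \<or> card (x \<inter> b) = 2"
    proof (cases "i = 1")
      case True then show ?thesis using i unfolding b_def by simp
    next
      case False
      then have "x \<inter> b = {n,n+1}" using i unfolding b_def by auto
      then show ?thesis by simp
    qed
  qed
  then have A3: "allconn B3" unfolding B3_def by (rule allconn_addX[OF A2 bB2])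
  have "card (c \<inter> a) = 2" unfolding a_def c_def using n by simp
  moreover have aB3: "a \<in> B3" using aB1 B12(1,2) by (meson subsetD)
  ultimately have A4: "allconn B4" unfolding B4_def using allconn_add1[OF A3] by metis
  have "card (d \<inter> c) = 2" unfolding c_def d_def using n by simp
  then have A5: "allconn B5" unfolding B5_def by (rule allconn_add1[OF A4 cB4])
  have "\<forall>x\<in>X6. x = d \<or> card (x \<inter> d) = 2"
  proof
    fix x assume "x \<in> X6"
    then obtain i where i: "i \<in> {1..<n}" "x = {i,n+2,n+3}" unfolding X6_def by auto
    then have "x \<inter> d = {n+2,n+3}" unfolding d_def by auto
    then show "x = d \<or> card (x \<inter> d) = 2" by simp
  qed
  then have A6: "allconn B6" unfolding B6_def by (rule allconn_addX[OF A5 dB5])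
  have "card (e \<inter> b) = 2" unfolding b_def e_def using n by simp
  moreover have bB6: "b \<in> B6" using bB2 B12(2,3,4,5) by (meson subsetD)
  ultimately have A7: "allconn B7" unfolding B7_def using allconn_add1[OF A6] by metis
  have "card (g \<inter> c) = 2" unfolding c_def g_def using n by simp
  moreover have cB7: "c \<in> B7" using cB4 B12(4,5,6) by (meson subsetD)
  ultimately have A8: "allconn B8" unfolding B8_def using allconn_add1[OF A7] by metis
  have bX3: "b \<in> X3" unfolding b_def X3_def by (rule image_eqI[of _ _ 1]) (use n in auto)
  have ss: "set (step n) = {a} \<union> X3 \<union> {c, d} \<union> X6 \<union> {e, g}"
    unfolding a_def c_def d_def e_def g_def X3_def X6_def by (rule set_step)
  have "B8 = E \<union> set (step n)"
    unfolding B8_def B7_def B6_def B5_def B4_def B3_def B2_def B1_def ss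
    by (rule un_shape[OF bX3])
  then show ?thesis using A8 by simp
qed

function constr :: "nat \<Rightarrow> nat set list" where
  "constr n = (if n < 3 then [] else if n = 3 then [{0,1,2}]
     else if n = 4 then [{0,1,2},{0,1,3},{1,2,3}]
     else if n = 5 then [{0,1,2},{0,1,3},{1,2,3},{0,1,4},{2,3,4}]
     else if n = 6 then [{0,1,2},{0,1,3},{0,1,4},{0,2,5},{1,3,5},{2,4,5},{2,3,4}]
     else constr (n - 4) @ step (n - 4))"
  by auto
termination by (relation "measure id") auto

declare constr.simps[simp del]

definition good :: "nat \<Rightarrow> bool" where
  "good n \<longleftrightarrow> (\<forall>e\<in>set (constr n). e \<subseteq> {..<n} \<and> card e = 3)
     \<and> allconn (set (constr n))
     \<and> (\<forall>u v. u < v \<longrightarrow> v < n \<longrightarrow> (\<exists>e\<in>set (constr n). u \<in> e \<and> v \<in> e))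
     \<and> length (constr n) = (n choose 2) div 2"

lemma good_intro:
  "(\<forall>e\<in>set (constr n). e \<subseteq> {..<n} \<and> card e = 3) \<Longrightarrow> allconn (set (constr n))
   \<Longrightarrow> (\<forall>u v. u < v \<longrightarrow> v < n \<longrightarrow> (\<exists>e\<in>set (constr n). u \<in> e \<and> v \<in> e))
   \<Longrightarrow> length (constr n) = (n choose 2) div 2 \<Longrightarrow> good n"
  unfolding good_def by blast

lemma good3: "good 3"
proof -
  have c: "constr 3 = [{0,1,2}]" by (simp add: constr.simps)
  have "allconn (set [{0::nat,1,2}])" by (simp add: allconn_single)
  then have ac: "allconn (set (constr 3))" by (simp only: c)
  show ?thesis
  proof (rule good_intro[OF _ ac])
    show "length (constr 3) = (3 choose 2) div 2" unfolding c by (simp add: choose_two)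
    show "\<forall>e\<in>set (constr 3). e \<subseteq> {..<3} \<and> card e = 3" unfolding c by simp
    show "\<forall>u v. u < v \<longrightarrow> v < 3 \<longrightarrow> (\<exists>e\<in>set (constr 3). u \<in> e \<and> v \<in> e)"
      unfolding c by (auto simp: less_Suc_eq numeral_eq_Suc)
  qed
qed

lemma good4: "good 4"
proof -
  have c: "constr 4 = [{0,1,2}] @ [{0,1,3},{1,2,3}]" by (simp add: constr.simps)
  have "allconn (set ([{0::nat,1,2}] @ [{0,1,3},{1,2,3}]))"
    by (rule ok_allconn) (simp_all add: allconn_single)
  then have ac: "allconn (set (constr 4))" by (simp only: c)
  show ?thesis
  proof (rule good_intro[OF _ ac])
    show "length (constr 4) = (4 choose 2) div 2" unfolding c by (simp add: choose_two)
    show "\<forall>e\<in>set (constr 4). e \<subseteq> {..<4} \<and> card e = 3" unfolding c by simp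
    show "\<forall>u v. u < v \<longrightarrow> v < 4 \<longrightarrow> (\<exists>e\<in>set (constr 4). u \<in> e \<and> v \<in> e)"
      unfolding c by (auto simp: less_Suc_eq numeral_eq_Suc)
  qed
qed

lemma good5: "good 5"
proof -
  have c: "constr 5 = [{0,1,2}] @ [{0,1,3},{1,2,3},{0,1,4},{2,3,4}]" by (simp add: constr.simps)
  have "allconn (set ([{0::nat,1,2}] @ [{0,1,3},{1,2,3},{0,1,4},{2,3,4}]))"
    by (rule ok_allconn) (simp_all add: allconn_single)
  then have ac: "allconn (set (constr 5))" by (simp only: c)
  show ?thesis
  proof (rule good_intro[OF _ ac])
    show "length (constr 5) = (5 choose 2) div 2" unfolding c by (simp add: choose_two)
    show "\<forall>e\<in>set (constr 5). e \<subseteq> {..<5} \<and> card e = 3" unfolding c by simp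
    show "\<forall>u v. u < v \<longrightarrow> v < 5 \<longrightarrow> (\<exists>e\<in>set (constr 5). u \<in> e \<and> v \<in> e)"
      unfolding c by (auto simp: less_Suc_eq numeral_eq_Suc)
  qed
qed

lemma good6: "good 6"
proof -
  have c: "constr 6 = [{0,1,2}] @ [{0,1,3},{0,1,4},{0,2,5},{1,3,5},{2,4,5},{2,3,4}]" by (simp add: constr.simps)
  have "allconn (set ([{0::nat,1,2}] @ [{0,1,3},{0,1,4},{0,2,5},{1,3,5},{2,4,5},{2,3,4}]))"
    by (rule ok_allconn) (simp_all add: allconn_single)
  then have ac: "allconn (set (constr 6))" by (simp only: c)
  show ?thesis
  proof (rule good_intro[OF _ ac])
    show "length (constr 6) = (6 choose 2) div 2" unfolding c by (simp add: choose_two)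
    show "\<forall>e\<in>set (constr 6). e \<subseteq> {..<6} \<and> card e = 3" unfolding c by simp
    show "\<forall>u v. u < v \<longrightarrow> v < 6 \<longrightarrow> (\<exists>e\<in>set (constr 6). u \<in> e \<and> v \<in> e)"
      unfolding c by (auto simp: less_Suc_eq numeral_eq_Suc)
  qed
qed

lemma good_step:
  assumes m: "m \<ge> 3" and g: "good m"
  shows "good (m + 4)"
proof -
  have c: "constr (m + 4) = constr m @ step m" using m by (simp add: constr.simps[of "m+4"])
  have U: "\<forall>e\<in>set (constr m). e \<subseteq> {..<m} \<and> card e = 3"
    and A: "allconn (set (constr m))"
    and C: "\<forall>u v. u < v \<longrightarrow> v < m \<longrightarrow> (\<exists>e\<in>set (constr m). u \<in> e \<and> v \<in> e)"
    and L: "length (constr m) = (m choose 2) div 2"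
    using g unfolding good_def by auto
  obtain f where f: "f \<in> set (constr m)" "0 \<in> f" "1 \<in> f" using C m by force
  have fs: "f \<subseteq> {..<m}" using U f(1) by auto
  have U': "\<forall>e\<in>set (constr (m+4)). e \<subseteq> {..<m+4} \<and> card e = 3"
  proof
    fix e assume "e \<in> set (constr (m+4))"
    then have "e \<in> set (constr m) \<or> e \<in> set (step m)" unfolding c by simp
    then show "e \<subseteq> {..<m+4} \<and> card e = 3"
    proof
      assume "e \<in> set (constr m)"
      then have "e \<subseteq> {..<m}" "card e = 3" using U by simp_all
      then show ?thesis by auto
    next
      assume "e \<in> set (step m)"
      then show ?thesis using step_U[OF m] by simp
    qed
  qed
  have A': "allconn (set (constr (m+4)))"
    unfolding c using step_A[OF m A f fs] by simp
  have C': "\<forall>u v. u < v \<longrightarrow> v < m + 4 \<longrightarrow> (\<exists>e\<in>set (constr (m+4)). u \<in> e \<and> v \<in> e)"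
  proof (intro allI impI)
    fix u v assume uv: "u < v" "v < m + 4"
    show "\<exists>e\<in>set (constr (m+4)). u \<in> e \<and> v \<in> e"
    proof (cases "v < m")
      case True then show ?thesis using C uv unfolding c by auto
    next
      case False then show ?thesis using step_C[OF m uv(1) _ uv(2)] unfolding c by auto
    qed
  qed
  have L': "length (constr (m+4)) = ((m+4) choose 2) div 2"
    unfolding c ch4 using L step_len[of m] m by simp
  show ?thesis unfolding good_def using U' A' C' L' by blast
qed

lemma good_all: "n \<ge> 3 \<Longrightarrow> good n"
proof (induction n rule: less_induct)
  case (less n)
  show ?case
  proof (cases "n \<le> 6")
    case True
    then have "n = 3 \<or> n = 4 \<or> n = 5 \<or> n = 6" using less.prems by arith
    then show ?thesis using good3 good4 good5 good6 by auto
  next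
    case False
    then have "n = (n - 4) + 4" "n - 4 \<ge> 3" "n - 4 < n" by arith+
    then show ?thesis using less.IH[of "n-4"] good_step[of "n-4"] by metis
  qed
qed

lemma pair_form: "P \<subseteq> {..<n::nat} \<Longrightarrow> card P = 2 \<Longrightarrow> \<exists>u v. u < v \<and> v < n \<and> P = {u, v}"
proof -
  assume P: "P \<subseteq> {..<n}" "card P = 2"
  then obtain x y where xy: "P = {x,y}" "x \<noteq> y" by (auto simp: card_2_iff)
  show ?thesis
  proof (cases "x < y")
    case True then show ?thesis using xy P(1) by auto
  next
    case False
    then have "y < x" using xy(2) by (meson linorder_neqE_nat)
    then show ?thesis using xy P(1) by (intro exI[of _ y] exI[of _ x]) auto
  qed
qed

lemma part2: "\<exists>E :: nat set set. uniform3 {..<n} E \<and> hg_connected {..<n} E \<and> card E = (n choose 2) div 2"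
proof (cases "n < 3")
  case True
  have ch0: "(n choose 2) div 2 = 0"
  proof (cases "n < 2")
    case True then show ?thesis by (simp add: binomial_eq_0)
  next
    case c: False
    then have "n = 2" using True by arith
    then show ?thesis by simp
  qed
  have "hg_connected {..<n} {}"
    unfolding hg_connected_def
  proof (intro allI impI)
    fix P Q :: "nat set"
    assume H: "P \<subseteq> {..<n}" "card P = 2" "Q \<subseteq> {..<n}" "card Q = 2" "P \<noteq> Q"
    have "card P \<le> n" using card_mono[OF _ H(1)] by simp
    then have n2: "n = 2" using H(2) True by arith
    have "P = {..<n}" using card_subset_eq[OF _ H(1)] H(2) n2 by simp
    moreover have "Q = {..<n}" using card_subset_eq[OF _ H(3)] H(4) n2 by simp
    ultimately show "\<exists>ps. strong_path {} ps \<and> P \<subseteq> hd ps \<and> Q \<subseteq> last ps" using H(5) by simp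
  qed
  then show ?thesis using ch0 by (intro exI[of _ "{}"]) (simp add: uniform3_def)
next
  case False
  then have g: "good n" using good_all by simp
  let ?E = "set (constr n)"
  have U: "uniform3 {..<n} ?E" using g unfolding good_def uniform3_def by simp
  have cov: "\<forall>P. P \<subseteq> {..<n} \<longrightarrow> card P = 2 \<longrightarrow> (\<exists>e\<in>?E. P \<subseteq> e)"
  proof (intro allI impI)
    fix P assume P: "P \<subseteq> {..<n}" "card P = 2"
    obtain u v where uv: "u < v" "v < n" "P = {u,v}" using pair_form[OF P] by blast
    obtain e where "e \<in> ?E" "u \<in> e" "v \<in> e" using g uv unfolding good_def by meson
    then show "\<exists>e\<in>?E. P \<subseteq> e" using uv by auto
  qed
  have Cn: "hg_connected {..<n} ?E" by (rule hg_conn_of) (use g cov in \<open>simp_all add: good_def\<close>)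
  have "(card {..<n} choose 2) div 2 \<le> card ?E" by (rule part1[OF U Cn])
  moreover have "card ?E \<le> (n choose 2) div 2" using card_length[of "constr n"] g unfolding good_def by simp
  ultimately have "card ?E = (n choose 2) div 2" by simp
  then show ?thesis using U Cn by blast
qed

theorem lemma13:
  shows "(\<forall>(V :: 'a set) E. uniform3 V E \<longrightarrow> hg_connected V E \<longrightarrow>
            card E \<ge> (card V choose 2) div 2)
       \<and> (\<forall>n::nat. \<exists>E :: nat set set. uniform3 {..<n} E \<and> hg_connected {..<n} E
            \<and> card E = (n choose 2) div 2)"
  using part1 part2 by blast

end
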